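(* Let $V$ be a finite-dimensional real vector space, let $T_1,\dots,T_n\in V^*$ be linearly independent, and let $Q$ be a quadratic form on $V$ which is not identically zero on $\bigcap_{i=1}^n\ker(T_i)$. If $F\in\mathbb{R}[z_0,\dots,z_n]$ is a polynomial such that the function $V\to\mathbb{R}$, $v\mapsto F(Q(v),T_1(v),\dots,T_n(v))$, is identically zero, then $F$ is the zero polynomial. *)

theory Defs
  imports "HOL-Analysis.Analysis"
begin

text \<open>A real polynomial in variables z_0, z_1, ... is represented by its coefficient
  function c on exponent vectors (monomials) alpha :: nat \<Rightarrow> nat; the monomial
  alpha stands for prod_i z_i ^ (alpha i).\<close>

definition is_poly_in_vars :: "nat \<Rightarrow> ((nat \<Rightarrow> nat) \<Rightarrow> real) \<Rightarrow> bool" where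
  "is_poly_in_vars n c \<longleftrightarrow>
     finite {\<alpha>. c \<alpha> \<noteq> 0} \<and> (\<forall>\<alpha>. c \<alpha> \<noteq> 0 \<longrightarrow> (\<forall>i>n. \<alpha> i = 0))"

definition poly_eval :: "((nat \<Rightarrow> nat) \<Rightarrow> real) \<Rightarrow> (nat \<Rightarrow> real) \<Rightarrow> real" where
  "poly_eval c z = (\<Sum>\<alpha>\<in>{\<alpha>. c \<alpha> \<noteq> 0}. c \<alpha> * (\<Prod>i\<in>{i. \<alpha> i \<noteq> 0}. z i ^ \<alpha> i))"

definition quadratic_form :: "('v::real_vector \<Rightarrow> real) \<Rightarrow> bool" where
  "quadratic_form Q \<longleftrightarrow> (\<exists>B. bilinear B \<and> (\<forall>v. Q v = B v v))"

end

theory Submission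
  imports Defs
begin

definition mono_ev :: "(nat \<Rightarrow> nat) \<Rightarrow> (nat \<Rightarrow> real) \<Rightarrow> real" where
  "mono_ev \<alpha> z = (\<Prod>i\<in>{i. \<alpha> i \<noteq> 0}. z i ^ \<alpha> i)"

definition ck :: "((nat \<Rightarrow> nat) \<Rightarrow> real) \<Rightarrow> nat \<Rightarrow> nat \<Rightarrow> (nat \<Rightarrow> nat) \<Rightarrow> real" where
  "ck c m k = (\<lambda>\<alpha>. if \<alpha> m = 0 then c (\<alpha>(m:=k)) else 0)"

lemma eval_sub:
  assumes "finite S" "{\<alpha>. c \<alpha> \<noteq> 0} \<subseteq> S"
  shows "poly_eval c z = (\<Sum>\<alpha>\<in>S. c \<alpha> * mono_ev \<alpha> z)"
  unfolding poly_eval_def mono_ev_def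
  by (rule sum.mono_neutral_left) (use assms in auto)

lemma mono_split:
  assumes "finite {i. \<alpha> i \<noteq> 0}"
  shows "mono_ev \<alpha> z = z m ^ \<alpha> m * mono_ev (\<alpha>(m:=0)) z"
proof (cases "\<alpha> m = 0")
  case True
  then have "\<alpha>(m:=0) = \<alpha>" by auto
  then show ?thesis using True by simp
next
  case False
  have e: "{i. \<alpha> i \<noteq> 0} = insert m {i. (\<alpha>(m:=0)) i \<noteq> 0}" using False by auto
  have f: "finite {i. (\<alpha>(m:=0)) i \<noteq> 0}" using assms by (rule rev_finite_subset) auto
  have "mono_ev \<alpha> z = z m ^ \<alpha> m * (\<Prod>i\<in>{i. (\<alpha>(m:=0)) i \<noteq> 0}. z i ^ \<alpha> i)"
    unfolding mono_ev_def e using f by (subst prod.insert) auto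
  also have "(\<Prod>i\<in>{i. (\<alpha>(m:=0)) i \<noteq> 0}. z i ^ \<alpha> i) = mono_ev (\<alpha>(m:=0)) z"
    unfolding mono_ev_def by (rule prod.cong) auto
  finally show ?thesis .
qed

lemma eval_agree:
  assumes "\<And>\<alpha> i. c \<alpha> \<noteq> 0 \<Longrightarrow> \<alpha> i \<noteq> 0 \<Longrightarrow> z i = z' i"
  shows "poly_eval c z = poly_eval c z'"
  unfolding poly_eval_def
  by (rule sum.cong[OF refl], rule arg_cong[where f="\<lambda>x. _ * x"], rule prod.cong) (use assms in auto)

lemma ck_supp:
  "{\<beta>. ck c m k \<beta> \<noteq> 0} = (\<lambda>\<alpha>. \<alpha>(m:=0)) ` {\<alpha>. c \<alpha> \<noteq> 0 \<and> \<alpha> m = k}"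
proof (intro set_eqI iffI)
  fix \<beta> assume "\<beta> \<in> {\<beta>. ck c m k \<beta> \<noteq> 0}"
  then have "\<beta> m = 0" "c (\<beta>(m:=k)) \<noteq> 0" unfolding ck_def by (auto split: if_splits)
  then show "\<beta> \<in> (\<lambda>\<alpha>. \<alpha>(m:=0)) ` {\<alpha>. c \<alpha> \<noteq> 0 \<and> \<alpha> m = k}"
    by (intro image_eqI[of _ _ "\<beta>(m:=k)"]) auto
next
  fix \<beta> assume "\<beta> \<in> (\<lambda>\<alpha>. \<alpha>(m:=0)) ` {\<alpha>. c \<alpha> \<noteq> 0 \<and> \<alpha> m = k}"
  then obtain \<alpha> where "c \<alpha> \<noteq> 0" "\<alpha> m = k" "\<beta> = \<alpha>(m:=0)" by auto
  moreover have "\<alpha>(m:=0,m:=k) = \<alpha>" using \<open>\<alpha> m = k\<close> by auto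
  ultimately show "\<beta> \<in> {\<beta>. ck c m k \<beta> \<noteq> 0}" unfolding ck_def by auto
qed

lemma eval_group:
  assumes fin: "finite {\<alpha>. c \<alpha> \<noteq> 0}"
    and fv: "\<And>\<alpha>. c \<alpha> \<noteq> 0 \<Longrightarrow> finite {i. \<alpha> i \<noteq> 0}"
    and K: "\<And>\<alpha>. c \<alpha> \<noteq> 0 \<Longrightarrow> \<alpha> m \<le> K"
  shows "poly_eval c z = (\<Sum>k\<le>K. poly_eval (ck c m k) z * z m ^ k)"
proof -
  let ?S = "{\<alpha>. c \<alpha> \<noteq> 0}"
  have inner: "poly_eval (ck c m k) z * z m ^ k = (\<Sum>\<alpha>\<in>{\<alpha>\<in>?S. \<alpha> m = k}. c \<alpha> * mono_ev \<alpha> z)" for k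
  proof -
    have inj: "inj_on (\<lambda>\<alpha>. \<alpha>(m:=0)) {\<alpha>. c \<alpha> \<noteq> 0 \<and> \<alpha> m = k}"
    proof (rule inj_onI)
      fix x y assume "x \<in> {\<alpha>. c \<alpha> \<noteq> 0 \<and> \<alpha> m = k}" "y \<in> {\<alpha>. c \<alpha> \<noteq> 0 \<and> \<alpha> m = k}" "x(m:=0) = y(m:=0)"
      show "x = y"
      proof
        fix i show "x i = y i"
          using \<open>x \<in> _\<close> \<open>y \<in> _\<close> fun_cong[OF \<open>x(m:=0) = y(m:=0)\<close>, of i]
          by (cases "i = m") auto
      qed
    qed
    have fk: "finite {\<alpha>. c \<alpha> \<noteq> 0 \<and> \<alpha> m = k}" using fin by (rule rev_finite_subset) auto
    have "poly_eval (ck c m k) z = (\<Sum>\<beta>\<in>{\<beta>. ck c m k \<beta> \<noteq> 0}. ck c m k \<beta> * mono_ev \<beta> z)"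
      unfolding poly_eval_def mono_ev_def by simp
    also have "\<dots> = (\<Sum>\<alpha>\<in>{\<alpha>. c \<alpha> \<noteq> 0 \<and> \<alpha> m = k}. ck c m k (\<alpha>(m:=0)) * mono_ev (\<alpha>(m:=0)) z)"
      unfolding ck_supp by (rule sum.reindex[OF inj, unfolded comp_def])
    also have "\<dots> = (\<Sum>\<alpha>\<in>{\<alpha>. c \<alpha> \<noteq> 0 \<and> \<alpha> m = k}. c \<alpha> * mono_ev (\<alpha>(m:=0)) z)"
    proof (rule sum.cong[OF refl])
      fix \<alpha> assume "\<alpha> \<in> {\<alpha>. c \<alpha> \<noteq> 0 \<and> \<alpha> m = k}"
      then have "\<alpha>(m:=0,m:=k) = \<alpha>" by auto
      then show "ck c m k (\<alpha>(m:=0)) * mono_ev (\<alpha>(m:=0)) z = c \<alpha> * mono_ev (\<alpha>(m:=0)) z"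
        unfolding ck_def by simp
    qed
    finally have "poly_eval (ck c m k) z * z m ^ k
       = (\<Sum>\<alpha>\<in>{\<alpha>. c \<alpha> \<noteq> 0 \<and> \<alpha> m = k}. c \<alpha> * (z m ^ \<alpha> m * mono_ev (\<alpha>(m:=0)) z))"
      by (simp add: sum_distrib_left ac_simps)
    also have "\<dots> = (\<Sum>\<alpha>\<in>{\<alpha>\<in>?S. \<alpha> m = k}. c \<alpha> * mono_ev \<alpha> z)"
    proof (rule sum.cong)
      fix \<alpha> assume "\<alpha> \<in> {\<alpha>\<in>?S. \<alpha> m = k}"
      then have "c \<alpha> \<noteq> 0" "\<alpha> m = k" by auto
      then show "c \<alpha> * (z m ^ \<alpha> m * mono_ev (\<alpha>(m:=0)) z) = c \<alpha> * mono_ev \<alpha> z"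
        using mono_split[OF fv[OF \<open>c \<alpha> \<noteq> 0\<close>], of z m] by simp
    qed auto
    finally show ?thesis .
  qed
  have "(\<Sum>k\<le>K. poly_eval (ck c m k) z * z m ^ k)
      = (\<Sum>k\<le>K. \<Sum>\<alpha>\<in>{\<alpha>\<in>?S. \<alpha> m = k}. c \<alpha> * mono_ev \<alpha> z)"
    using inner by simp
  also have "\<dots> = (\<Sum>\<alpha>\<in>?S. c \<alpha> * mono_ev \<alpha> z)"
    by (rule sum.group) (use fin K in auto)
  also have "\<dots> = poly_eval c z" unfolding poly_eval_def mono_ev_def by simp
  finally show ?thesis by simp
qed


lemma ck_vanish_agree:
  "poly_eval (ck c m k) (z(m:=x)) = poly_eval (ck c m k) z"
  by (rule eval_agree) (auto simp: ck_def split: if_splits)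

lemma zero_poly_aux:
  "\<forall>c. finite {\<alpha>. c \<alpha> \<noteq> 0} \<longrightarrow> (\<forall>\<alpha>. c \<alpha> \<noteq> 0 \<longrightarrow> (\<forall>i\<ge>m. \<alpha> i = 0))
     \<longrightarrow> (\<forall>z. poly_eval c z = 0) \<longrightarrow> (\<forall>\<alpha>. c \<alpha> = 0)"
proof (induction m)
  case 0
  show ?case
  proof (intro allI impI)
    fix c :: "(nat \<Rightarrow> nat) \<Rightarrow> real" and \<alpha>
    assume v: "\<forall>\<alpha>. c \<alpha> \<noteq> 0 \<longrightarrow> (\<forall>i\<ge>0. \<alpha> i = 0)" and z: "\<forall>z. poly_eval c z = 0"
    have sub: "{\<alpha>. c \<alpha> \<noteq> 0} \<subseteq> {(\<lambda>_. 0)}" using v by auto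
    have "poly_eval c (\<lambda>_. 0) = (\<Sum>\<alpha>\<in>{(\<lambda>_. 0)}. c \<alpha> * mono_ev \<alpha> (\<lambda>_. 0))"
      by (rule eval_sub[OF _ sub]) simp
    also have "\<dots> = c (\<lambda>_. 0)" by (simp add: mono_ev_def)
    finally have "c (\<lambda>_. 0) = 0" using z by simp
    show "c \<alpha> = 0"
    proof (rule ccontr)
      assume a: "c \<alpha> \<noteq> 0"
      then have "\<alpha> = (\<lambda>_. 0)" using v by auto
      then show False using a \<open>c (\<lambda>_. 0) = 0\<close> by simp
    qed
  qed
next
  case (Suc m)
  show ?case
  proof (intro allI impI)
    fix c :: "(nat \<Rightarrow> nat) \<Rightarrow> real" and \<alpha>
    assume fin: "finite {\<alpha>. c \<alpha> \<noteq> 0}" and v: "\<forall>\<alpha>. c \<alpha> \<noteq> 0 \<longrightarrow> (\<forall>i\<ge>Suc m. \<alpha> i = 0)"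
      and z: "\<forall>z. poly_eval c z = 0"
    obtain K where K0: "\<forall>n\<in>(\<lambda>\<beta>. \<beta> m) ` {\<alpha>. c \<alpha> \<noteq> 0}. n \<le> K"
      using finite_nat_set_iff_bounded_le[THEN iffD1, OF finite_imageI[OF fin, of "\<lambda>\<beta>. \<beta> m"]]
      by blast
    have K: "\<beta> m \<le> K" if "c \<beta> \<noteq> 0" for \<beta> using K0 that by blast
    have fv: "finite {i. \<beta> i \<noteq> 0}" if "c \<beta> \<noteq> 0" for \<beta>
    proof -
      have "{i. \<beta> i \<noteq> 0} \<subseteq> {..<Suc m}"
      proof
        fix i assume "i \<in> {i. \<beta> i \<noteq> 0}"
        then have "\<beta> i \<noteq> 0" by simp
        show "i \<in> {..<Suc m}"
        proof (rule ccontr)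
          assume "i \<notin> {..<Suc m}"
          then have "Suc m \<le> i" by simp
          then have "\<beta> i = 0" using v that by blast
          then show False using \<open>\<beta> i \<noteq> 0\<close> by simp
        qed
      qed
      then show ?thesis by (rule finite_subset) simp
    qed
    have ckz: "ck c m k = (\<lambda>_. 0)" for k
    proof -
      have "(\<forall>\<beta>. ck c m k \<beta> \<noteq> 0 \<longrightarrow> (\<forall>i\<ge>m. \<beta> i = 0))"
      proof (intro allI impI)
        fix \<beta> i assume "ck c m k \<beta> \<noteq> 0" "m \<le> i"
        then have "\<beta> m = 0" "c (\<beta>(m:=k)) \<noteq> 0" unfolding ck_def by (auto split: if_splits)
        show "\<beta> i = 0"
        proof (cases "i = m")
          case False
          then have "Suc m \<le> i" using \<open>m \<le> i\<close> by simp
          then have "(\<beta>(m:=k)) i = 0" using v \<open>c (\<beta>(m:=k)) \<noteq> 0\<close> by blast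
          then show ?thesis using False by simp
        qed (use \<open>\<beta> m = 0\<close> in simp)
      qed
      moreover have "finite {\<beta>. ck c m k \<beta> \<noteq> 0}"
        unfolding ck_supp using fin by auto
      moreover have "\<forall>y. poly_eval (ck c m k) y = 0"
      proof
        fix y
        have "\<forall>x. (\<Sum>j\<le>K. poly_eval (ck c m j) y * x ^ j) = 0"
        proof
          fix x
          have "0 = poly_eval c (y(m:=x))" using z by simp
          also have "\<dots> = (\<Sum>j\<le>K. poly_eval (ck c m j) (y(m:=x)) * (y(m:=x)) m ^ j)"
            by (rule eval_group[OF fin fv K])
          finally show "(\<Sum>j\<le>K. poly_eval (ck c m j) y * x ^ j) = 0"
            by (simp add: ck_vanish_agree)
        qed
        then have all: "\<forall>j\<le>K. poly_eval (ck c m j) y = 0"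
          by (rule polyfun_eq_0[THEN iffD1])
        show "poly_eval (ck c m k) y = 0"
        proof (cases "k \<le> K")
          case True then show ?thesis using all by simp
        next
          case False
          then have "{\<alpha>. c \<alpha> \<noteq> 0 \<and> \<alpha> m = k} = {}" using K by fastforce
          then have "{\<beta>. ck c m k \<beta> \<noteq> 0} = {}" unfolding ck_supp by simp
          then show ?thesis unfolding poly_eval_def by (simp only: sum.empty)
        qed
      qed
      ultimately have "\<forall>\<beta>. ck c m k \<beta> = 0" using Suc.IH by blast
      then show ?thesis by (simp add: fun_eq_iff)
    qed
    show "c \<alpha> = 0"
    proof (rule ccontr)
      assume "c \<alpha> \<noteq> 0"
      moreover have "\<alpha>(m:=0,m:=\<alpha> m) = \<alpha>" by simp
      ultimately have "ck c m (\<alpha> m) (\<alpha>(m:=0)) \<noteq> 0" unfolding ck_def by simp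
      then show False using ckz by simp
    qed
  qed
qed


lemma span_rep:
  fixes a :: "nat \<Rightarrow> 'v::euclidean_space"
  assumes "y \<in> span (a ` I)" "finite I"
  shows "\<exists>\<mu>. y = (\<Sum>i\<in>I. \<mu> i *\<^sub>R a i)"
  using assms(1)
proof (induction rule: span_induct_alt)
  case base
  show ?case by (rule exI[of _ "\<lambda>_. 0"]) simp
next
  case (step c x y)
  then obtain i0 where i0: "i0 \<in> I" "x = a i0" by auto
  from step obtain \<mu> where mu: "y = (\<Sum>i\<in>I. \<mu> i *\<^sub>R a i)" by auto
  have "c *\<^sub>R x + y = (\<Sum>i\<in>I. (\<mu> i + (if i = i0 then c else 0)) *\<^sub>R a i)"
    using i0 assms(2) by (simp add: mu scaleR_add_left sum.distrib if_distrib[of "\<lambda>t. t *\<^sub>R _"] sum.delta cong: if_cong)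
  then show ?case by (rule exI[where x="\<lambda>i. \<mu> i + (if i = i0 then c else 0)"])
qed

lemma dual_vec:
  fixes a :: "nat \<Rightarrow> 'v::euclidean_space"
  assumes fin: "finite I" and j: "j \<in> I"
    and ind: "\<forall>\<mu>. (\<forall>v. (\<Sum>i\<in>I. \<mu> i * (a i \<bullet> v)) = 0) \<longrightarrow> (\<forall>i\<in>I. \<mu> i = 0)"
  shows "\<exists>b. \<forall>i\<in>I. a i \<bullet> b = (if i = j then 1 else 0)"
proof -
  obtain y z where y: "y \<in> span (a ` (I - {j}))"
    and z: "\<And>w. w \<in> span (a ` (I - {j})) \<Longrightarrow> orthogonal z w" and yz: "a j = y + z"
    using orthogonal_subspace_decomp_exists[of "a ` (I - {j})" "a j"] by blast
  have z0: "z \<noteq> 0"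
  proof
    assume "z = 0"
    obtain \<mu> where mu: "y = (\<Sum>i\<in>I - {j}. \<mu> i *\<^sub>R a i)" using span_rep[OF y] fin by blast
    define \<nu> where "\<nu> i = (if i = j then 1 else - \<mu> i)" for i
    have "\<forall>v. (\<Sum>i\<in>I. \<nu> i * (a i \<bullet> v)) = 0"
    proof
      fix v
      have "(\<Sum>i\<in>I. \<nu> i * (a i \<bullet> v)) = \<nu> j * (a j \<bullet> v) + (\<Sum>i\<in>I - {j}. \<nu> i * (a i \<bullet> v))"
        using fin j by (simp add: sum.remove)
      also have "(\<Sum>i\<in>I - {j}. \<nu> i * (a i \<bullet> v)) = - (\<Sum>i\<in>I - {j}. \<mu> i * (a i \<bullet> v))"
        by (simp add: \<nu>_def sum_negf[symmetric])
      also have "(\<Sum>i\<in>I - {j}. \<mu> i * (a i \<bullet> v)) = y \<bullet> v"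
        by (simp add: mu inner_sum_left)
      also have "a j = y" using yz \<open>z = 0\<close> by simp
      finally show "(\<Sum>i\<in>I. \<nu> i * (a i \<bullet> v)) = 0" by (simp add: \<nu>_def)
    qed
    then have "\<nu> j = 0" using ind j by blast
    then show False by (simp add: \<nu>_def)
  qed
  have zz: "z \<bullet> z \<noteq> 0" using z0 by simp
  show ?thesis
  proof (intro exI ballI)
    fix i assume i: "i \<in> I"
    show "a i \<bullet> (z /\<^sub>R (z \<bullet> z)) = (if i = j then 1 else 0)"
    proof (cases "i = j")
      case True
      have "y \<bullet> z = 0" using z[OF y] by (simp add: orthogonal_def inner_commute)
      then have "a j \<bullet> z = z \<bullet> z" using yz by (simp add: inner_add_left)
      then show ?thesis using True zz by simp
    next
      case False
      then have "a i \<in> span (a ` (I - {j}))" using i by (intro span_base) auto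
      then have "a i \<bullet> z = 0" using z by (simp add: orthogonal_def inner_commute[of z])
      then show ?thesis using False by simp
    qed
  qed
qed

lemma infinite_quad:
  fixes q p r :: real
  assumes "q \<noteq> 0"
  shows "infinite (range (\<lambda>s. q * s^2 + p * s + r))"
proof
  assume fin: "finite (range (\<lambda>s. q * s^2 + p * s + r))"
  have fib: "finite {s. q * s^2 + p * s + r = y}" for y
  proof -
    define cc where "cc i = (if i = 0 then r - y else if i = 1 then p else if i = 2 then q else 0)" for i :: nat
    have "finite {s. (\<Sum>i\<le>2. cc i * s^i) = 0}"
      using polyfun_finite_roots[of cc 2] assms by (auto simp: cc_def)
    moreover have "{s. (\<Sum>i\<le>2. cc i * s^i) = 0} = {s. q * s^2 + p * s + r = y}"
      by (auto simp: cc_def eval_nat_numeral algebra_simps)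
    ultimately show ?thesis by simp
  qed
  have eq: "(UNIV :: real set) = (\<Union>y\<in>range (\<lambda>s. q * s^2 + p * s + r). {s. q * s^2 + p * s + r = y})"
    by auto
  have "finite (\<Union>y\<in>range (\<lambda>s. q * s^2 + p * s + r). {s. q * s^2 + p * s + r = y})"
    by (rule finite_UN_I[OF fin fib])
  then have "finite (UNIV :: real set)" by (subst eq)
  then show False using infinite_UNIV_char_0[where 'a=real] by blast
qed


theorem lemma4p1:
  fixes T :: "nat \<Rightarrow> 'v::euclidean_space \<Rightarrow> real"
    and Q :: "'v \<Rightarrow> real"
    and n :: nat
    and c :: "(nat \<Rightarrow> nat) \<Rightarrow> real"
  assumes lin: "\<forall>i\<in>{1..n}. linear (T i)"
    and indep: "\<forall>a :: nat \<Rightarrow> real. (\<forall>v. (\<Sum>i=1..n. a i * T i v) = 0) \<longrightarrow> (\<forall>i\<in>{1..n}. a i = 0)"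
    and quad: "quadratic_form Q"
    and nonzero: "\<exists>v. (\<forall>i\<in>{1..n}. T i v = 0) \<and> Q v \<noteq> 0"
    and poly: "is_poly_in_vars n c"
    and vanish: "\<forall>v. poly_eval c (\<lambda>i. if i = 0 then Q v else T i v) = 0"
  shows "\<forall>\<alpha>. c \<alpha> = 0"
proof -
  have fin: "finite {\<alpha>. c \<alpha> \<noteq> 0}" and vars: "\<And>\<alpha> i. c \<alpha> \<noteq> 0 \<Longrightarrow> n < i \<Longrightarrow> \<alpha> i = 0"
    using poly unfolding is_poly_in_vars_def by auto
  have fv: "finite {i. \<beta> i \<noteq> 0}" if "c \<beta> \<noteq> 0" for \<beta>
  proof -
    have "{i. \<beta> i \<noteq> 0} \<subseteq> {..n}"
    proof
      fix i assume "i \<in> {i. \<beta> i \<noteq> 0}"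
      then have "\<beta> i \<noteq> 0" by simp
      show "i \<in> {..n}"
      proof (rule ccontr)
        assume "i \<notin> {..n}"
        then have "n < i" by simp
        then have "\<beta> i = 0" using vars that by blast
        then show False using \<open>\<beta> i \<noteq> 0\<close> by simp
      qed
    qed
    then show ?thesis by (rule finite_subset) simp
  qed
  obtain K where K0: "\<forall>k\<in>(\<lambda>\<beta>. \<beta> 0) ` {\<alpha>. c \<alpha> \<noteq> 0}. k \<le> K"
    using finite_nat_set_iff_bounded_le[THEN iffD1, OF finite_imageI[OF fin, of "\<lambda>\<beta>. \<beta> 0"]]
    by blast
  have K: "\<beta> 0 \<le> K" if "c \<beta> \<noteq> 0" for \<beta> using K0 that by blast
  define a where "a i = adjoint (T i) 1" for i
  have Ta: "T i v = v \<bullet> a i" if "i \<in> {1..n}" for i v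
    using adjoint_works[of "T i" v 1] lin that by (simp add: a_def)
  have ind: "\<forall>\<mu>. (\<forall>v. (\<Sum>i\<in>{1..n}. \<mu> i * (a i \<bullet> v)) = 0) \<longrightarrow> (\<forall>i\<in>{1..n}. \<mu> i = 0)"
  proof (intro allI impI)
    fix \<mu> assume h: "\<forall>v. (\<Sum>i\<in>{1..n}. \<mu> i * (a i \<bullet> v)) = 0"
    have "\<forall>v. (\<Sum>i=1..n. \<mu> i * T i v) = 0"
    proof
      fix v
      have "(\<Sum>i=1..n. \<mu> i * T i v) = (\<Sum>i\<in>{1..n}. \<mu> i * (a i \<bullet> v))"
        by (rule sum.cong) (auto simp: Ta inner_commute)
      then show "(\<Sum>i=1..n. \<mu> i * T i v) = 0" using h by simp
    qed
    then show "\<forall>i\<in>{1..n}. \<mu> i = 0" using indep by blast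
  qed
  have "\<forall>j\<in>{1..n}. \<exists>b. \<forall>i\<in>{1..n}. a i \<bullet> b = (if i = j then 1 else 0)"
    using dual_vec[OF _ _ ind] by simp
  then obtain b where b: "\<And>i j. i \<in> {1..n} \<Longrightarrow> j \<in> {1..n} \<Longrightarrow> a i \<bullet> b j = (if i = j then 1 else 0)"
    by metis
  define u where "u t = (\<Sum>j\<in>{1..n}. t j *\<^sub>R b j)" for t :: "nat \<Rightarrow> real"
  have Tu: "T i (u t) = t i" if "i \<in> {1..n}" for i t
  proof -
    have "T i (u t) = (\<Sum>j\<in>{1..n}. t j * (a i \<bullet> b j))"
      using that by (simp add: Ta u_def inner_sum_left inner_commute[of "b _" "a i"])
    also have "\<dots> = (\<Sum>j\<in>{1..n}. if j = i then t j else 0)"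
      by (rule sum.cong) (use that b in auto)
    also have "\<dots> = t i" using that by simp
    finally show ?thesis .
  qed
  obtain w where w: "\<And>i. i \<in> {1..n} \<Longrightarrow> T i w = 0" and Qw: "Q w \<noteq> 0" using nonzero by blast
  obtain B where B: "bilinear B" and QB: "\<And>v. Q v = B v v" using quad unfolding quadratic_form_def by blast
  have Qsu: "Q (s *\<^sub>R w + x) = B w w * s^2 + (B w x + B x w) * s + B x x" for s x
    using B by (simp add: QB bilinear_ladd bilinear_radd bilinear_lmul bilinear_rmul power2_eq_square algebra_simps)
  have allz: "\<forall>z. poly_eval c z = 0"
  proof
    fix z :: "nat \<Rightarrow> real"
    define coef where "coef k = poly_eval (ck c 0 k) z" for k
    have val: "poly_eval c (z(0:=x)) = (\<Sum>k\<le>K. coef k * x ^ k)" for x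
      using eval_group[OF fin fv K, where z="z(0:=x)"] by (simp add: coef_def ck_vanish_agree)
    have sub: "range (\<lambda>s. B w w * s^2 + (B w (u z) + B (u z) w) * s + B (u z) (u z))
        \<subseteq> {x. (\<Sum>k\<le>K. coef k * x ^ k) = 0}"
    proof clarify
      fix s
      let ?v = "s *\<^sub>R w + u z"
      have Tv: "T i ?v = z i" if "i \<in> {1..n}" for i
      proof -
        have "T i ?v = ?v \<bullet> a i" using Ta that by blast
        also have "\<dots> = s * (w \<bullet> a i) + u z \<bullet> a i" by (simp add: inner_add_left)
        also have "w \<bullet> a i = 0" using w[OF that] Ta[OF that] by simp
        also have "u z \<bullet> a i = z i" using Tu[OF that] Ta[OF that] by simp
        finally show ?thesis by simp
      qed
      have "poly_eval c (z(0 := Q ?v)) = poly_eval c (\<lambda>i. if i = 0 then Q ?v else T i ?v)"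
      proof (rule eval_agree)
        fix \<alpha> i assume "c \<alpha> \<noteq> 0" "\<alpha> i \<noteq> 0"
        then have "i \<le> n" using vars not_less by blast
        then show "(z(0 := Q ?v)) i = (if i = 0 then Q ?v else T i ?v)"
          using Tv by (cases "i = 0") auto
      qed
      also have "\<dots> = 0" using vanish by blast
      finally have "(\<Sum>k\<le>K. coef k * (Q ?v) ^ k) = 0" using val by simp
      then show "(\<Sum>k\<le>K. coef k * (B w w * s^2 + (B w (u z) + B (u z) w) * s + B (u z) (u z)) ^ k) = 0"
        using Qsu by simp
    qed
    have "B w w \<noteq> 0" using Qw QB by simp
    then have "infinite (range (\<lambda>s. B w w * s^2 + (B w (u z) + B (u z) w) * s + B (u z) (u z)))"
      by (rule infinite_quad)
    then have "infinite {x. (\<Sum>k\<le>K. coef k * x ^ k) = 0}"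
      using sub finite_subset by blast
    moreover have "finite {x. (\<Sum>k\<le>K. coef k * x ^ k) = 0} \<longleftrightarrow> (\<exists>k\<le>K. coef k \<noteq> 0)"
      by (rule polyfun_finite_roots)
    ultimately have "\<not> (\<exists>k\<le>K. coef k \<noteq> 0)" by blast
    then have "\<forall>k\<le>K. coef k = 0" by simp
    then have "poly_eval c (z(0 := x)) = 0" for x using val by simp
    from this[of "z 0"] show "poly_eval c z = 0" by simp
  qed
  have "\<forall>\<alpha>. c \<alpha> \<noteq> 0 \<longrightarrow> (\<forall>i\<ge>Suc n. \<alpha> i = 0)" using vars by auto
  then show ?thesis using zero_poly_aux fin allz by blast
qed

end
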